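(* Let $A$ be a ring, $\delta=(\delta_1,\ldots,\delta_n)$ an $n$-tuple of pairwise commuting derivations of $A$, $d_i\in\mathbb{N}\cup\{\infty\}$, $I=\{\alpha\in\mathbb{N}^n\mid\alpha_i\le d_i\ \forall i\}$, and suppose there are elements $y^{[\alpha]}\in N_\alpha$ ($\alpha\in I$) with $\delta^\alpha(y^{[\alpha]})=1$. Then: (1) there exists a unique $\delta$-descent $\{x^{[\alpha]}\mid\alpha\in I\}$ such that for each $0\neq\alpha\in I$, $x^{[\alpha]}=y^{[\alpha]}+\sum_{0\le\beta<\alpha}c_{\alpha\beta}y^{[\beta]}$ for some $c_{\alpha\beta}\in A^\delta$ with $c_{\alpha,0}=0$; (2) there exists a unique $\delta$-descent $\{z^{[\alpha]}\mid\alpha\in I\}$ such that for each $0\neq\alpha\in I$, $z^{[\alpha]}=y^{[\alpha]}+\sum_{0\le\beta<\alpha}y^{[\beta]}b_{\alpha\beta}$ for some $b_{\alpha\beta}\in A^\delta$ with $b_{\alpha,0}=0$.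
   Context: $A^\delta=\bigcap_i\ker\delta_i$; $N_\alpha=\bigcap_{i=1}^n\ker\delta_i^{\alpha_i+1}$; $\beta\le\alpha$ means $\beta_i\le\alpha_i$ for all $i$, and $\beta<\alpha$ means $\beta\le\alpha$, $\beta\neq\alpha$; $\delta^\alpha=\delta_1^{\alpha_1}\cdots\delta_n^{\alpha_n}$. A family $\{x^{[\alpha]}\mid\alpha\in I\}$ is a $\delta$-descent if $x^{[0]}=1$ and $\delta^\alpha(x^{[\beta]})=x^{[\beta-\alpha]}$ for all $\alpha\in\mathbb{N}^n$, $\beta\in I$, with $x^{[\gamma]}:=0$ for $\gamma\notin\mathbb{N}^n$. *)

theory Defs
  imports Main "HOL-Library.Extended_Nat"
begin

definition derivation :: "('a::ring_1 \<Rightarrow> 'a) \<Rightarrow> bool" where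
  "derivation D \<longleftrightarrow> (\<forall>x y. D (x + y) = D x + D y) \<and> (\<forall>x y. D (x * y) = D x * y + x * D y)"

text \<open>Multi-indices in N^n, represented as functions nat => nat vanishing from n on.\<close>
definition multi_idx :: "nat \<Rightarrow> (nat \<Rightarrow> nat) set" where
  "multi_idx n = {\<alpha>. \<forall>i\<ge>n. \<alpha> i = 0}"

definition idx_set :: "nat \<Rightarrow> (nat \<Rightarrow> enat) \<Rightarrow> (nat \<Rightarrow> nat) set" where
  "idx_set n d = {\<alpha> \<in> multi_idx n. \<forall>i<n. enat (\<alpha> i) \<le> d i}"

text \<open>delta^alpha = delta_1^alpha_1 ... delta_n^alpha_n (indices 0..n-1).\<close>
definition delta_pow :: "nat \<Rightarrow> (nat \<Rightarrow> 'a \<Rightarrow> 'a) \<Rightarrow> (nat \<Rightarrow> nat) \<Rightarrow> 'a \<Rightarrow> 'a" where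
  "delta_pow n \<delta> \<alpha> = foldr (\<lambda>i f. (\<delta> i ^^ \<alpha> i) \<circ> f) [0..<n] id"

definition const_ring :: "nat \<Rightarrow> (nat \<Rightarrow> 'a::zero \<Rightarrow> 'a) \<Rightarrow> 'a set" where
  "const_ring n \<delta> = {x. \<forall>i<n. \<delta> i x = 0}"

definition N_set :: "nat \<Rightarrow> (nat \<Rightarrow> 'a::zero \<Rightarrow> 'a) \<Rightarrow> (nat \<Rightarrow> nat) \<Rightarrow> 'a set" where
  "N_set n \<delta> \<alpha> = {x. \<forall>i<n. (\<delta> i ^^ (\<alpha> i + 1)) x = 0}"

text \<open>A family x indexed by I (values outside I irrelevant) is a delta-descent.
  x^[gamma] := 0 for gamma not in N^n, i.e. when beta - alpha has a negative entry.\<close>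
definition descent :: "nat \<Rightarrow> (nat \<Rightarrow> 'a::ring_1 \<Rightarrow> 'a) \<Rightarrow> (nat \<Rightarrow> nat) set \<Rightarrow> ((nat \<Rightarrow> nat) \<Rightarrow> 'a) \<Rightarrow> bool" where
  "descent n \<delta> I x \<longleftrightarrow> x (\<lambda>_. 0) = 1 \<and>
     (\<forall>\<alpha>\<in>multi_idx n. \<forall>\<beta>\<in>I.
        delta_pow n \<delta> \<alpha> (x \<beta>) = (if \<alpha> \<le> \<beta> then x (\<lambda>i. \<beta> i - \<alpha> i) else 0))"

end

theory Submission
  imports Defs
begin

definition addf :: "('a::ab_group_add \<Rightarrow> 'a) \<Rightarrow> bool" where
  "addf f \<longleftrightarrow> (\<forall>a b. f (a + b) = f a + f b)"

lemma addf_0: "addf f \<Longrightarrow> f 0 = 0"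
  unfolding addf_def by (metis add_cancel_left_right add_0)
lemma addf_minus: "addf f \<Longrightarrow> f (- a) = - f a"
  unfolding addf_def by (metis add.right_inverse addf_0 addf_def add_eq_0_iff)
lemma addf_diff: "addf f \<Longrightarrow> f (a - b) = f a - f b"
  by (metis addf_def addf_minus diff_conv_add_uminus)
lemma addf_sum: "addf f \<Longrightarrow> f (sum g A) = (\<Sum>x\<in>A. f (g x))"
  apply (induction A rule: infinite_finite_induct)
  by (auto simp: addf_0 addf_def)
lemma addf_comp: "addf f \<Longrightarrow> addf g \<Longrightarrow> addf (f \<circ> g)"
  by (simp add: addf_def)
lemma addf_id: "addf id" by (simp add: addf_def)
lemma addf_funpow: "addf f \<Longrightarrow> addf (f ^^ k)"
  by (induction k) (auto simp: addf_def)

lemma funpow_comm: "f \<circ> g = g \<circ> f \<Longrightarrow> f ^^ a \<circ> g = g \<circ> f ^^ a"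
proof (induction a)
  case (Suc a)
  then show ?case by (metis comp_assoc funpow_Suc_right)
qed simp

lemma funpow_comm2: "f \<circ> g = g \<circ> f \<Longrightarrow> f ^^ a \<circ> g ^^ b = g ^^ b \<circ> f ^^ a"
  by (metis funpow_comm)

definition FF :: "(nat \<Rightarrow> 'a \<Rightarrow> 'a) \<Rightarrow> nat list \<Rightarrow> (nat \<Rightarrow> nat) \<Rightarrow> 'a \<Rightarrow> 'a" where
  "FF \<delta> xs \<alpha> = foldr (\<lambda>i f. (\<delta> i ^^ \<alpha> i) \<circ> f) xs id"

lemma FF_Cons: "FF \<delta> (i # xs) \<alpha> = (\<delta> i ^^ \<alpha> i) \<circ> FF \<delta> xs \<alpha>"
  by (simp add: FF_def)
lemma FF_Nil: "FF \<delta> [] \<alpha> = id"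
  by (simp add: FF_def)

lemma dp_FF: "delta_pow n \<delta> \<alpha> = FF \<delta> [0..<n] \<alpha>"
  by (simp add: delta_pow_def FF_def)

lemma FF_zero: "FF \<delta> xs (\<lambda>_. 0) = id"
  by (induction xs) (auto simp: FF_Cons FF_Nil)

lemma FF_unit: "distinct xs \<Longrightarrow> FF \<delta> xs (\<lambda>j. if j = i then k else 0) = (if i \<in> set xs then \<delta> i ^^ k else id)"
proof (induction xs)
  case Nil then show ?case by (simp add: FF_Nil)
next
  case (Cons a xs)
  then show ?case
    by (auto simp: FF_Cons FF_zero[unfolded FF_def] FF_def cong: if_cong)
qed

lemma FF_addf: "(\<And>i. i \<in> set xs \<Longrightarrow> addf (\<delta> i)) \<Longrightarrow> addf (FF \<delta> xs \<alpha>)"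
  by (induction xs) (auto simp: FF_Cons FF_Nil addf_id addf_comp addf_funpow)

lemma FF_comm: "(\<And>j. j \<in> set xs \<Longrightarrow> \<delta> i \<circ> \<delta> j = \<delta> j \<circ> \<delta> i) \<Longrightarrow>
   (\<delta> i ^^ k) \<circ> FF \<delta> xs \<alpha> = FF \<delta> xs \<alpha> \<circ> (\<delta> i ^^ k)"
proof (induction xs)
  case Nil then show ?case by (simp add: FF_Nil)
next
  case (Cons a xs)
  have 1: "(\<delta> i ^^ k) \<circ> (\<delta> a ^^ \<alpha> a) = (\<delta> a ^^ \<alpha> a) \<circ> (\<delta> i ^^ k)"
    by (meson Cons.prems funpow_comm2 list.set_intros(1))
  have 2: "(\<delta> i ^^ k) \<circ> FF \<delta> xs \<alpha> = FF \<delta> xs \<alpha> \<circ> (\<delta> i ^^ k)"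
    by (rule Cons.IH) (simp add: Cons.prems)
  have "(\<delta> i ^^ k) \<circ> FF \<delta> (a # xs) \<alpha> = ((\<delta> i ^^ k) \<circ> (\<delta> a ^^ \<alpha> a)) \<circ> FF \<delta> xs \<alpha>"
    by (simp only: FF_Cons comp_assoc)
  also have "\<dots> = (\<delta> a ^^ \<alpha> a) \<circ> ((\<delta> i ^^ k) \<circ> FF \<delta> xs \<alpha>)"
    by (simp only: 1 comp_assoc)
  also have "\<dots> = FF \<delta> (a # xs) \<alpha> \<circ> (\<delta> i ^^ k)"
    by (simp only: 2 FF_Cons comp_assoc)
  finally show ?case .
qed

lemma FF_add: "(\<And>i j. i \<in> set xs \<Longrightarrow> j \<in> set xs \<Longrightarrow> \<delta> i \<circ> \<delta> j = \<delta> j \<circ> \<delta> i) \<Longrightarrow>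
   FF \<delta> xs (\<lambda>j. \<alpha> j + \<beta> j) = FF \<delta> xs \<alpha> \<circ> FF \<delta> xs \<beta>"
proof (induction xs)
  case Nil then show ?case by (simp add: FF_Nil)
next
  case (Cons a xs)
  have c: "(\<delta> a ^^ \<beta> a) \<circ> FF \<delta> xs \<alpha> = FF \<delta> xs \<alpha> \<circ> (\<delta> a ^^ \<beta> a)"
    by (meson Cons.prems FF_comm list.set_intros)
  have "FF \<delta> (a # xs) (\<lambda>j. \<alpha> j + \<beta> j) = (\<delta> a ^^ \<alpha> a) \<circ> (\<delta> a ^^ \<beta> a) \<circ> (FF \<delta> xs \<alpha> \<circ> FF \<delta> xs \<beta>)"
  proof -
    have "FF \<delta> xs (\<lambda>j. \<alpha> j + \<beta> j) = FF \<delta> xs \<alpha> \<circ> FF \<delta> xs \<beta>"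
      by (rule Cons.IH) (simp add: Cons.prems)
    then show ?thesis by (simp add: FF_Cons funpow_add)
  qed
  also have "\<dots> = (\<delta> a ^^ \<alpha> a) \<circ> ((\<delta> a ^^ \<beta> a) \<circ> FF \<delta> xs \<alpha>) \<circ> FF \<delta> xs \<beta>"
    by (simp add: comp_assoc)
  also have "\<dots> = FF \<delta> (a # xs) \<alpha> \<circ> FF \<delta> (a # xs) \<beta>"
    by (simp add: c FF_Cons comp_assoc)
  finally show ?case .
qed

lemma FF_lin: "(\<And>i. i \<in> set xs \<Longrightarrow> \<forall>a. \<delta> i (g a) = g (\<delta> i a)) \<Longrightarrow> FF \<delta> xs \<alpha> (g a) = g (FF \<delta> xs \<alpha> a)"
proof (induction xs arbitrary: a)
  case Nil then show ?case by (simp add: FF_Nil)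
next
  case (Cons i xs)
  have "\<And>k b. (\<delta> i ^^ k) (g b) = g ((\<delta> i ^^ k) b)"
  proof -
    fix k b show "(\<delta> i ^^ k) (g b) = g ((\<delta> i ^^ k) b)"
      by (induction k) (use Cons.prems in auto)
  qed
  then show ?case using Cons by (simp add: FF_Cons)
qed


section \<open>Index lemmas\<close>

definition lvl :: "nat \<Rightarrow> (nat \<Rightarrow> nat) \<Rightarrow> nat" where
  "lvl n \<alpha> = sum \<alpha> {..<n}"

lemma M_le: "\<alpha> \<in> multi_idx n \<Longrightarrow> \<beta> \<le> \<alpha> \<Longrightarrow> \<beta> \<in> multi_idx n"
  by (auto simp: multi_idx_def le_fun_def) (metis le_zero_eq)

lemma I_le: "\<alpha> \<in> idx_set n d \<Longrightarrow> \<beta> \<le> \<alpha> \<Longrightarrow> \<beta> \<in> idx_set n d"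
  unfolding idx_set_def using M_le
  by (auto simp: le_fun_def) (meson enat_ord_simps(1) order_trans)

lemma sub_le: "(\<lambda>i. \<alpha> i - \<gamma> i) \<le> (\<alpha>::nat\<Rightarrow>nat)"
  by (auto simp: le_fun_def)

lemma I_sub: "\<alpha> \<in> idx_set n d \<Longrightarrow> (\<lambda>i. \<alpha> i - \<gamma> i) \<in> idx_set n d"
  using I_le sub_le by blast

lemma I_M: "\<alpha> \<in> idx_set n d \<Longrightarrow> \<alpha> \<in> multi_idx n"
  by (simp add: idx_set_def)

lemma fin_le: "\<alpha> \<in> multi_idx n \<Longrightarrow> finite {\<beta>. \<beta> \<le> \<alpha>}"
proof -
  assume a: "\<alpha> \<in> multi_idx n"
  have "{\<beta>. \<beta> \<le> \<alpha>} \<subseteq> {f. \<forall>x. (x \<in> {..<n} \<longrightarrow> f x \<in> {..lvl n \<alpha>}) \<and> (x \<notin> {..<n} \<longrightarrow> f x = 0)}"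
  proof (clarsimp)
    fix \<beta> x assume b: "\<beta> \<le> \<alpha>"
    show "(x < n \<longrightarrow> \<beta> x \<le> lvl n \<alpha>) \<and> (\<not> x < n \<longrightarrow> \<beta> x = 0)"
    proof (intro conjI impI)
      assume "x < n"
      then have "\<alpha> x \<le> lvl n \<alpha>" unfolding lvl_def by (intro member_le_sum) auto
      then show "\<beta> x \<le> lvl n \<alpha>" using b by (metis le_fun_def order_trans)
    next
      assume "\<not> x < n" then show "\<beta> x = 0" using a b by (auto simp: multi_idx_def le_fun_def) (metis le_zero_eq not_less)
    qed
  qed
  moreover have "finite {f. \<forall>x. (x \<in> {..<n} \<longrightarrow> f x \<in> {..lvl n \<alpha>}) \<and> (x \<notin> {..<n} \<longrightarrow> f x = (0::nat))}"
    by (rule finite_set_of_finite_funs) auto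
  ultimately show ?thesis by (rule finite_subset)
qed

lemma fin_less: "\<alpha> \<in> multi_idx n \<Longrightarrow> finite {\<beta>. \<beta> < \<alpha>}"
  by (rule finite_subset[OF _ fin_le]) auto

lemma lvl_mono: "\<beta> \<le> \<alpha> \<Longrightarrow> lvl n \<beta> \<le> lvl n \<alpha>"
  unfolding lvl_def by (intro sum_mono) (auto simp: le_fun_def)

lemma lvl_strict: "\<alpha> \<in> multi_idx n \<Longrightarrow> \<beta> \<le> \<alpha> \<Longrightarrow> \<beta> \<noteq> \<alpha> \<Longrightarrow> lvl n \<beta> < lvl n \<alpha>"
proof -
  assume a: "\<alpha> \<in> multi_idx n" "\<beta> \<le> \<alpha>" "\<beta> \<noteq> \<alpha>"
  then obtain i where i: "\<beta> i \<noteq> \<alpha> i" by auto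
  have "\<beta> \<in> multi_idx n" using a M_le by blast
  then have "i < n" using a i by (auto simp: multi_idx_def)
  moreover have "\<beta> i < \<alpha> i" using i a(2) by (simp add: le_fun_def order_less_le)
  ultimately show ?thesis unfolding lvl_def using a(2)
    by (intro sum_strict_mono_ex1) (auto simp: le_fun_def)
qed

lemma lvl_exists_less: "\<alpha> \<in> multi_idx n \<Longrightarrow> \<beta> \<le> \<alpha> \<Longrightarrow> \<beta> \<noteq> \<alpha> \<Longrightarrow> \<exists>i<n. \<beta> i < \<alpha> i"
proof -
  assume a: "\<alpha> \<in> multi_idx n" "\<beta> \<le> \<alpha>" "\<beta> \<noteq> \<alpha>"
  then obtain i where i: "\<beta> i \<noteq> \<alpha> i" by auto
  have "\<beta> \<in> multi_idx n" using a M_le by blast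
  then have "i < n" using a i by (auto simp: multi_idx_def)
  moreover have "\<beta> i < \<alpha> i" using i a(2) by (simp add: le_fun_def order_less_le)
  ultimately show ?thesis by blast
qed

lemma lvl_sub: "\<gamma> \<le> \<alpha> \<Longrightarrow> lvl n (\<lambda>i. \<alpha> i - \<gamma> i) = lvl n \<alpha> - lvl n \<gamma>"
  unfolding lvl_def by (rule sum_subtractf_nat) (auto simp: le_fun_def)

lemma lvl_zero: "lvl n (\<lambda>_. 0) = 0"
  by (simp add: lvl_def)

lemma lvl_pos: "\<gamma> \<in> multi_idx n \<Longrightarrow> \<gamma> \<noteq> (\<lambda>_. 0) \<Longrightarrow> 0 < lvl n \<gamma>"
  using lvl_strict[of \<gamma> n "\<lambda>_. 0"] by (simp add: lvl_zero le_fun_def)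

lemma lvl_e: "i < n \<Longrightarrow> lvl n (\<lambda>j. \<gamma> j + (if j = i then 1 else 0)) = lvl n \<gamma> + 1"
  unfolding lvl_def by (simp add: sum.distrib)


section \<open>Derivation context\<close>

lemma der_addf: "derivation D \<Longrightarrow> addf D"
  by (simp add: derivation_def addf_def)

lemma der_one: "derivation D \<Longrightarrow> D 1 = 0"
  unfolding derivation_def by (metis add_cancel_right_right mult_1 mult_1_right)

lemma der_lmul: "derivation D \<Longrightarrow> D c = 0 \<Longrightarrow> D (c * a) = c * D a"
  unfolding derivation_def by simp

lemma der_rmul: "derivation D \<Longrightarrow> D c = 0 \<Longrightarrow> D (a * c) = D a * c"
  unfolding derivation_def by simp

locale dctx =
  fixes n :: nat and \<delta> :: "nat \<Rightarrow> 'a::ring_1 \<Rightarrow> 'a"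
  assumes der: "\<And>i. i < n \<Longrightarrow> derivation (\<delta> i)"
    and comm: "\<And>i j. i < n \<Longrightarrow> j < n \<Longrightarrow> \<delta> i \<circ> \<delta> j = \<delta> j \<circ> \<delta> i"
begin

abbreviation "dp \<equiv> delta_pow n \<delta>"
abbreviation "C \<equiv> const_ring n \<delta>"

lemma dp_addf: "addf (dp \<alpha>)"
  unfolding dp_FF by (rule FF_addf) (auto intro: der_addf der)

lemma dp_0: "dp \<alpha> 0 = 0" using dp_addf addf_0 by blast
lemma dp_plus: "dp \<alpha> (a + b) = dp \<alpha> a + dp \<alpha> b" using dp_addf addf_def by blast
lemma dp_diff: "dp \<alpha> (a - b) = dp \<alpha> a - dp \<alpha> b" using dp_addf addf_diff by blast
lemma dp_sum: "dp \<alpha> (sum g A) = (\<Sum>x\<in>A. dp \<alpha> (g x))" using dp_addf addf_sum by blast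

lemma dp_add: "dp (\<lambda>j. \<alpha> j + \<beta> j) = dp \<alpha> \<circ> dp \<beta>"
  unfolding dp_FF by (rule FF_add) (auto intro: comm)

lemma dp_unit: "i < n \<Longrightarrow> dp (\<lambda>j. if j = i then k else 0) = \<delta> i ^^ k"
  unfolding dp_FF by (subst FF_unit) auto

lemma dp_zero: "dp (\<lambda>_. 0) = id"
  unfolding dp_FF by (rule FF_zero)

lemma dp_split: "i < n \<Longrightarrow> dp \<gamma> = dp (\<gamma>(i := 0)) \<circ> (\<delta> i ^^ \<gamma> i)"
proof -
  assume i: "i < n"
  have "\<gamma> = (\<lambda>j. (\<gamma>(i := 0)) j + (if j = i then \<gamma> i else 0))" by auto
  then have "dp \<gamma> = dp (\<lambda>j. (\<gamma>(i := 0)) j + (if j = i then \<gamma> i else 0))" by simp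
  also have "\<dots> = dp (\<gamma>(i := 0)) \<circ> (\<delta> i ^^ \<gamma> i)" by (simp add: dp_add dp_unit i fun_upd_def)
  finally show ?thesis .
qed

lemma funpow_addf_0: "addf f \<Longrightarrow> (f ^^ k) 0 = 0"
  using addf_0 addf_funpow by blast

lemma dp_N: "a \<in> N_set n \<delta> \<beta> \<Longrightarrow> i < n \<Longrightarrow> \<beta> i < \<gamma> i \<Longrightarrow> dp \<gamma> a = 0"
proof -
  assume a: "a \<in> N_set n \<delta> \<beta>" and i: "i < n" "\<beta> i < \<gamma> i"
  have z: "(\<delta> i ^^ (\<beta> i + 1)) a = 0" using a i by (simp add: N_set_def)
  have "\<gamma> i = (\<gamma> i - (\<beta> i + 1)) + (\<beta> i + 1)" using i by simp
  then have "(\<delta> i ^^ \<gamma> i) a = (\<delta> i ^^ (\<gamma> i - (\<beta> i + 1))) ((\<delta> i ^^ (\<beta> i + 1)) a)"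
    by (metis comp_apply funpow_add)
  also have "\<dots> = 0" using z funpow_addf_0[OF der_addf[OF der[OF i(1)]]] by simp
  finally show ?thesis using dp_split[OF i(1), of \<gamma>] dp_0 by simp
qed

lemma dp_shift: "i < n \<Longrightarrow> \<delta> i (dp \<gamma> a) = dp (\<lambda>j. (if j = i then 1 else 0) + \<gamma> j) a"
  using dp_add[of "\<lambda>j. if j = i then 1 else 0" \<gamma>] dp_unit[of i 1] by simp

lemma dp_unit1: "i < n \<Longrightarrow> dp (\<lambda>j. if j = i then 1 else 0) = \<delta> i"
  using dp_unit[of i 1] by simp

lemma dp_lin: "(\<And>i a. i < n \<Longrightarrow> \<delta> i (g a) = g (\<delta> i a)) \<Longrightarrow> dp \<gamma> (g a) = g (dp \<gamma> a)"
  unfolding dp_FF by (rule FF_lin) auto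

lemma C_mult: "c \<in> C \<Longrightarrow> c' \<in> C \<Longrightarrow> c * c' \<in> C"
  unfolding const_ring_def using der by (simp add: derivation_def)

lemma C_add: "c \<in> C \<Longrightarrow> c' \<in> C \<Longrightarrow> c + c' \<in> C"
  unfolding const_ring_def using der by (simp add: derivation_def)

lemma C_diff: "c \<in> C \<Longrightarrow> c' \<in> C \<Longrightarrow> c - c' \<in> C"
  unfolding const_ring_def using der der_addf addf_diff by fastforce

lemma C_0: "0 \<in> C"
  unfolding const_ring_def using der der_addf addf_0 by fastforce

lemma C_1: "1 \<in> C"
  unfolding const_ring_def using der der_one by fastforce

end


locale ctx = dctx n \<delta> for n and \<delta> :: "nat \<Rightarrow> 'a::ring_1 \<Rightarrow> 'a" +
  fixes d :: "nat \<Rightarrow> enat" and y :: "(nat \<Rightarrow> nat) \<Rightarrow> 'a"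
    and m :: "'a \<Rightarrow> 'a \<Rightarrow> 'a" and mc :: "'a \<Rightarrow> 'a \<Rightarrow> 'a"
  assumes yN: "\<And>\<alpha>. \<alpha> \<in> idx_set n d \<Longrightarrow> y \<alpha> \<in> N_set n \<delta> \<alpha>"
    and y1: "\<And>\<alpha>. \<alpha> \<in> idx_set n d \<Longrightarrow> delta_pow n \<delta> \<alpha> (y \<alpha>) = 1"
    and m_add1: "\<And>a b x. m (a + b) x = m a x + m b x"
    and m_add2: "\<And>a x z. m a (x + z) = m a x + m a z"
    and m_diff1: "\<And>a b x. m (a - b) x = m a x - m b x"
    and m_zero1: "\<And>x. m 0 x = 0"
    and m_one1: "\<And>x. m 1 x = x"
    and m_one2: "\<And>a. m a 1 = a"
    and m_assoc: "\<And>k c x. m k (m c x) = m (mc k c) x"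
    and mc_C: "\<And>k c. k \<in> const_ring n \<delta> \<Longrightarrow> c \<in> const_ring n \<delta> \<Longrightarrow> mc k c \<in> const_ring n \<delta>"
    and mc_0: "\<And>k. mc k 0 = 0"
    and m_delta: "\<And>c i x. c \<in> const_ring n \<delta> \<Longrightarrow> i < n \<Longrightarrow> \<delta> i (m c x) = m c (\<delta> i x)"
begin

abbreviation "I \<equiv> idx_set n d"
abbreviation "M \<equiv> multi_idx n"

definition sp :: "(nat \<Rightarrow> nat) \<Rightarrow> 'a \<Rightarrow> bool" where
  "sp \<alpha> s \<longleftrightarrow> (\<exists>c. (\<forall>\<beta>. c \<beta> \<in> C) \<and> c (\<lambda>_. 0) = 0 \<and> s = (\<Sum>\<beta>\<in>{\<beta>. \<beta> < \<alpha>}. m (c \<beta>) (y \<beta>)))"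

definition tri :: "(nat \<Rightarrow> nat) \<Rightarrow> 'a \<Rightarrow> bool" where
  "tri \<alpha> v \<longleftrightarrow> (\<exists>c. (\<forall>\<beta>. c \<beta> \<in> C) \<and> c (\<lambda>_. 0) = 0 \<and> v = y \<alpha> + (\<Sum>\<beta>\<in>{\<beta>. \<beta> < \<alpha>}. m (c \<beta>) (y \<beta>)))"

lemma tri_sp: "tri \<alpha> v \<longleftrightarrow> (\<exists>s. sp \<alpha> s \<and> v = y \<alpha> + s)"
  unfolding tri_def sp_def by auto

lemma m_addf: "addf (m k)"
  by (simp add: addf_def m_add2)

lemma sp_0: "sp \<alpha> 0"
  unfolding sp_def by (rule exI[of _ "\<lambda>_. 0"]) (simp add: C_0 m_zero1)

lemma sp_add: "sp \<alpha> s \<Longrightarrow> sp \<alpha> t \<Longrightarrow> sp \<alpha> (s + t)"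
  unfolding sp_def
proof (elim exE conjE)
  fix c c' assume h: "\<forall>\<beta>. c \<beta> \<in> C" "c (\<lambda>_. 0) = 0" "s = (\<Sum>\<beta>\<in>{\<beta>. \<beta> < \<alpha>}. m (c \<beta>) (y \<beta>))"
    "\<forall>\<beta>. c' \<beta> \<in> C" "c' (\<lambda>_. 0) = 0" "t = (\<Sum>\<beta>\<in>{\<beta>. \<beta> < \<alpha>}. m (c' \<beta>) (y \<beta>))"
  show "\<exists>c. (\<forall>\<beta>. c \<beta> \<in> C) \<and> c (\<lambda>_. 0) = 0 \<and> s + t = (\<Sum>\<beta>\<in>{\<beta>. \<beta> < \<alpha>}. m (c \<beta>) (y \<beta>))"
    by (rule exI[of _ "\<lambda>\<beta>. c \<beta> + c' \<beta>"]) (simp add: h C_add m_add1 sum.distrib)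
qed

lemma sp_diff: "sp \<alpha> s \<Longrightarrow> sp \<alpha> t \<Longrightarrow> sp \<alpha> (s - t)"
  unfolding sp_def
proof (elim exE conjE)
  fix c c' assume h: "\<forall>\<beta>. c \<beta> \<in> C" "c (\<lambda>_. 0) = 0" "s = (\<Sum>\<beta>\<in>{\<beta>. \<beta> < \<alpha>}. m (c \<beta>) (y \<beta>))"
    "\<forall>\<beta>. c' \<beta> \<in> C" "c' (\<lambda>_. 0) = 0" "t = (\<Sum>\<beta>\<in>{\<beta>. \<beta> < \<alpha>}. m (c' \<beta>) (y \<beta>))"
  show "\<exists>c. (\<forall>\<beta>. c \<beta> \<in> C) \<and> c (\<lambda>_. 0) = 0 \<and> s - t = (\<Sum>\<beta>\<in>{\<beta>. \<beta> < \<alpha>}. m (c \<beta>) (y \<beta>))"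
    by (rule exI[of _ "\<lambda>\<beta>. c \<beta> - c' \<beta>"]) (simp add: h C_diff m_diff1 sum_subtractf)
qed

lemma sp_m: "sp \<alpha> s \<Longrightarrow> k \<in> C \<Longrightarrow> sp \<alpha> (m k s)"
  unfolding sp_def
proof (elim exE conjE)
  fix c assume h: "\<forall>\<beta>. c \<beta> \<in> C" "c (\<lambda>_. 0) = 0" "s = (\<Sum>\<beta>\<in>{\<beta>. \<beta> < \<alpha>}. m (c \<beta>) (y \<beta>))"
    and k: "k \<in> C"
  show "\<exists>c. (\<forall>\<beta>. c \<beta> \<in> C) \<and> c (\<lambda>_. 0) = 0 \<and> m k s = (\<Sum>\<beta>\<in>{\<beta>. \<beta> < \<alpha>}. m (c \<beta>) (y \<beta>))"
    by (rule exI[of _ "\<lambda>\<beta>. mc k (c \<beta>)"])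
       (simp add: h k mc_C mc_0 addf_sum[OF m_addf] m_assoc)
qed

lemma sp_sum: "finite G \<Longrightarrow> (\<And>g. g \<in> G \<Longrightarrow> sp \<alpha> (f g)) \<Longrightarrow> sp \<alpha> (sum f G)"
  by (induction G rule: finite_induct) (auto simp: sp_0 sp_add)

lemma sp_mono: "\<alpha> \<in> M \<Longrightarrow> \<beta> \<le> \<alpha> \<Longrightarrow> sp \<beta> s \<Longrightarrow> sp \<alpha> s"
  unfolding sp_def
proof (elim exE conjE)
  fix c assume h: "\<forall>\<beta>. c \<beta> \<in> C" "c (\<lambda>_. 0) = 0" "s = (\<Sum>\<gamma>\<in>{\<gamma>. \<gamma> < \<beta>}. m (c \<gamma>) (y \<gamma>))"
    and a: "\<alpha> \<in> M" "\<beta> \<le> \<alpha>"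
  let ?c = "\<lambda>\<gamma>. if \<gamma> < \<beta> then c \<gamma> else 0"
  have sub: "{\<gamma>. \<gamma> < \<beta>} \<subseteq> {\<gamma>. \<gamma> < \<alpha>}" using a(2) by auto
  have "(\<Sum>\<gamma>\<in>{\<gamma>. \<gamma> < \<alpha>}. m (?c \<gamma>) (y \<gamma>)) = (\<Sum>\<gamma>\<in>{\<gamma>. \<gamma> < \<beta>}. m (?c \<gamma>) (y \<gamma>))"
    by (rule sum.mono_neutral_right[OF fin_less[OF a(1)] sub]) (auto simp: m_zero1)
  also have "\<dots> = s" using h(3) by (auto intro: sum.cong)
  finally show "\<exists>c. (\<forall>\<beta>. c \<beta> \<in> C) \<and> c (\<lambda>_. 0) = 0 \<and> s = (\<Sum>\<beta>\<in>{\<beta>. \<beta> < \<alpha>}. m (c \<beta>) (y \<beta>))"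
    using h(1,2) C_0 by (intro exI[of _ ?c]) auto
qed

lemma sp_y: "\<alpha> \<in> M \<Longrightarrow> \<beta> < \<alpha> \<Longrightarrow> \<beta> \<noteq> (\<lambda>_. 0) \<Longrightarrow> sp \<alpha> (y \<beta>)"
  unfolding sp_def
proof -
  assume a: "\<alpha> \<in> M" "\<beta> < \<alpha>" "\<beta> \<noteq> (\<lambda>_. 0)"
  let ?c = "\<lambda>\<gamma>. if \<gamma> = \<beta> then 1 else 0"
  have "(\<Sum>\<gamma>\<in>{\<gamma>. \<gamma> < \<alpha>}. m (?c \<gamma>) (y \<gamma>)) = (\<Sum>\<gamma>\<in>{\<gamma>. \<gamma> < \<alpha>}. if \<gamma> = \<beta> then y \<beta> else 0)"
    by (rule sum.cong) (auto simp: m_zero1 m_one1)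
  also have "\<dots> = y \<beta>" using a by (simp add: fin_less)
  finally show "\<exists>c. (\<forall>\<beta>. c \<beta> \<in> C) \<and> c (\<lambda>_. 0) = 0 \<and> y \<beta> = (\<Sum>\<beta>\<in>{\<beta>. \<beta> < \<alpha>}. m (c \<beta>) (y \<beta>))"
    using a C_0 C_1 by (intro exI[of _ ?c]) auto
qed

lemma dp_m: "c \<in> C \<Longrightarrow> dp \<gamma> (m c a) = m c (dp \<gamma> a)"
  by (rule dp_lin) (simp add: m_delta)

lemma dp_y0: "\<beta> \<in> I \<Longrightarrow> i < n \<Longrightarrow> \<beta> i < \<gamma> i \<Longrightarrow> dp \<gamma> (y \<beta>) = 0"
  using dp_N yN by blast

lemma sp_dp0: "\<alpha> \<in> I \<Longrightarrow> sp \<alpha> s \<Longrightarrow> i < n \<Longrightarrow> \<alpha> i < \<gamma> i \<Longrightarrow> dp \<gamma> s = 0"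
  unfolding sp_def
proof (elim exE conjE)
  fix c assume h: "\<forall>\<beta>. c \<beta> \<in> C" "s = (\<Sum>\<beta>\<in>{\<beta>. \<beta> < \<alpha>}. m (c \<beta>) (y \<beta>))"
    and a: "\<alpha> \<in> I" "i < n" "\<alpha> i < \<gamma> i"
  have "dp \<gamma> s = (\<Sum>\<beta>\<in>{\<beta>. \<beta> < \<alpha>}. m (c \<beta>) (dp \<gamma> (y \<beta>)))"
    using h by (simp add: dp_sum dp_m)
  also have "\<dots> = 0"
  proof (rule sum.neutral, clarify)
    fix \<beta> assume b: "\<beta> < \<alpha>"
    then have "\<beta> \<in> I" using a I_le by auto
    moreover have "\<beta> i < \<gamma> i" using b a by (metis le_fun_def order_le_less_trans order_less_imp_le)
    ultimately show "m (c \<beta>) (dp \<gamma> (y \<beta>)) = 0"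
      using dp_y0 a m_addf addf_0 by metis
  qed
  finally show "dp \<gamma> s = 0" .
qed

lemma sp_dpa: "\<alpha> \<in> I \<Longrightarrow> sp \<alpha> s \<Longrightarrow> dp \<alpha> s = 0"
  unfolding sp_def
proof (elim exE conjE)
  fix c assume h: "\<forall>\<beta>. c \<beta> \<in> C" "s = (\<Sum>\<beta>\<in>{\<beta>. \<beta> < \<alpha>}. m (c \<beta>) (y \<beta>))"
    and a: "\<alpha> \<in> I"
  have "dp \<alpha> s = (\<Sum>\<beta>\<in>{\<beta>. \<beta> < \<alpha>}. m (c \<beta>) (dp \<alpha> (y \<beta>)))"
    using h by (simp add: dp_sum dp_m)
  also have "\<dots> = 0"
  proof (rule sum.neutral, clarify)
    fix \<beta> assume b: "\<beta> < \<alpha>"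
    then have "\<beta> \<in> I" using a I_le by auto
    moreover obtain i where "i < n" "\<beta> i < \<alpha> i"
      using lvl_exists_less[OF I_M[OF a], of \<beta>] b by (auto simp: order_less_le)
    ultimately show "m (c \<beta>) (dp \<alpha> (y \<beta>)) = 0"
      using dp_y0 a m_addf addf_0 by metis
  qed
  finally show "dp \<alpha> s = 0" .
qed

lemma tri_dp0: "\<alpha> \<in> I \<Longrightarrow> tri \<alpha> v \<Longrightarrow> i < n \<Longrightarrow> \<alpha> i < \<gamma> i \<Longrightarrow> dp \<gamma> v = 0"
  unfolding tri_sp using sp_dp0 dp_y0 dp_plus by fastforce

lemma tri_dpa: "\<alpha> \<in> I \<Longrightarrow> tri \<alpha> v \<Longrightarrow> dp \<alpha> v = 1"
  unfolding tri_sp using sp_dpa y1 dp_plus by fastforce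


lemma not_le_ex: "\<beta>0 \<in> M \<Longrightarrow> \<not> \<beta>0 \<le> \<beta> \<Longrightarrow> \<exists>i<n. \<beta> i < \<beta>0 i"
  by (auto simp: le_fun_def multi_idx_def) (metis not_le_imp_less le0 not_less)

lemma sp_unique:
  assumes a: "\<alpha> \<in> I" and s: "sp \<alpha> s" and s': "sp \<alpha> s'"
    and h: "\<And>\<gamma>. \<gamma> \<le> \<alpha> \<Longrightarrow> \<gamma> \<noteq> (\<lambda>_. 0) \<Longrightarrow> dp \<gamma> s = dp \<gamma> s'"
  shows "s = s'"
proof -
  obtain c where c: "\<forall>\<beta>. c \<beta> \<in> C" "c (\<lambda>_. 0) = 0" "s = (\<Sum>\<beta>\<in>{\<beta>. \<beta> < \<alpha>}. m (c \<beta>) (y \<beta>))"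
    using s unfolding sp_def by blast
  obtain c' where c': "\<forall>\<beta>. c' \<beta> \<in> C" "c' (\<lambda>_. 0) = 0" "s' = (\<Sum>\<beta>\<in>{\<beta>. \<beta> < \<alpha>}. m (c' \<beta>) (y \<beta>))"
    using s' unfolding sp_def by blast
  define e where "e \<beta> = c \<beta> - c' \<beta>" for \<beta>
  have eC: "e \<beta> \<in> C" for \<beta> using c c' C_diff e_def by auto
  have e0: "e (\<lambda>_. 0) = 0" using c c' e_def by simp
  have diff: "s - s' = (\<Sum>\<beta>\<in>{\<beta>. \<beta> < \<alpha>}. m (e \<beta>) (y \<beta>))"
    using c c' by (simp add: e_def m_diff1 sum_subtractf)
  have aM: "\<alpha> \<in> M" using a I_M by blast
  have allz: "\<forall>\<beta>\<in>{\<beta>. \<beta> < \<alpha>}. e \<beta> = 0"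
  proof (rule ccontr)
    assume "\<not> ?thesis"
    then have ne: "{\<beta>. \<beta> < \<alpha> \<and> e \<beta> \<noteq> 0} \<noteq> {}" by auto
    have fin: "finite {\<beta>. \<beta> < \<alpha> \<and> e \<beta> \<noteq> 0}"
      by (rule finite_subset[OF _ fin_less[OF aM]]) auto
    obtain \<beta>0 where b0: "\<beta>0 \<in> {\<beta>. \<beta> < \<alpha> \<and> e \<beta> \<noteq> 0}"
      and mx: "\<forall>b\<in>{\<beta>. \<beta> < \<alpha> \<and> e \<beta> \<noteq> 0}. \<beta>0 \<le> b \<longrightarrow> \<beta>0 = b"
      using finite_has_maximal[OF fin ne] by blast
    have b0le: "\<beta>0 \<le> \<alpha>" using b0 by auto
    have b0I: "\<beta>0 \<in> I" using I_le a b0le by blast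
    have b0M: "\<beta>0 \<in> M" using I_M b0I by blast
    have b0nz: "\<beta>0 \<noteq> (\<lambda>_. 0)" using b0 e0 by auto
    have "dp \<beta>0 (s - s') = 0" using h[OF b0le b0nz] dp_diff by simp
    moreover have "dp \<beta>0 (s - s') = (\<Sum>\<beta>\<in>{\<beta>. \<beta> < \<alpha>}. m (e \<beta>) (dp \<beta>0 (y \<beta>)))"
      by (simp add: diff dp_sum dp_m eC)
    moreover have "\<dots> = (\<Sum>\<beta>\<in>{\<beta>. \<beta> < \<alpha>}. if \<beta> = \<beta>0 then e \<beta>0 else 0)"
    proof (rule sum.cong[OF refl])
      fix \<beta> assume b: "\<beta> \<in> {\<beta>. \<beta> < \<alpha>}"
      show "m (e \<beta>) (dp \<beta>0 (y \<beta>)) = (if \<beta> = \<beta>0 then e \<beta>0 else 0)"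
      proof (cases "\<beta> = \<beta>0")
        case True then show ?thesis using y1[OF b0I] m_one2 by simp
      next
        case False
        show ?thesis
        proof (cases "e \<beta> = 0")
          case True then show ?thesis using False m_zero1 by simp
        next
          case ne: False
          then have "\<not> \<beta>0 \<le> \<beta>" using mx b False by auto
          then obtain i where i: "i < n" "\<beta> i < \<beta>0 i" using not_le_ex b0M by blast
          have "\<beta> \<in> I" using b a I_le by auto
          then have "dp \<beta>0 (y \<beta>) = 0" using dp_y0 i by blast
          then show ?thesis using False m_addf addf_0 by metis
        qed
      qed
    qed
    moreover have "\<dots> = e \<beta>0" using b0 by (simp add: fin_less[OF aM])
    ultimately show False using b0 by simp
  qed
  have "s - s' = 0" unfolding diff using allz m_zero1 by simp
  then show ?thesis by simp
qed


definition goodm :: "nat \<Rightarrow> ((nat \<Rightarrow> nat) \<Rightarrow> 'a) \<Rightarrow> bool" where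
  "goodm k x \<longleftrightarrow> x (\<lambda>_. 0) = 1 \<and> (\<forall>\<alpha>\<in>I. lvl n \<alpha> \<le> k \<longrightarrow>
     (\<alpha> \<noteq> (\<lambda>_. 0) \<longrightarrow> tri \<alpha> (x \<alpha>)) \<and>
     (\<forall>\<gamma>\<in>M. dp \<gamma> (x \<alpha>) = (if \<gamma> \<le> \<alpha> then x (\<lambda>i. \<alpha> i - \<gamma> i) else 0)))"

lemma goodm_dp: "goodm k x \<Longrightarrow> \<beta> \<in> I \<Longrightarrow> lvl n \<beta> \<le> k \<Longrightarrow> \<gamma> \<in> M \<Longrightarrow>
    dp \<gamma> (x \<beta>) = (if \<gamma> \<le> \<beta> then x (\<lambda>i. \<beta> i - \<gamma> i) else 0)"
  unfolding goodm_def by blast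

lemma goodm_tri: "goodm k x \<Longrightarrow> \<beta> \<in> I \<Longrightarrow> lvl n \<beta> \<le> k \<Longrightarrow> \<beta> \<noteq> (\<lambda>_. 0) \<Longrightarrow> tri \<beta> (x \<beta>)"
  unfolding goodm_def by blast

lemma goodm_0: "goodm k x \<Longrightarrow> x (\<lambda>_. 0) = 1"
  unfolding goodm_def by blast

lemma lvl_sub_less: "\<alpha> \<in> M \<Longrightarrow> \<gamma> \<le> \<alpha> \<Longrightarrow> \<gamma> \<noteq> (\<lambda>_. 0) \<Longrightarrow> lvl n (\<lambda>i. \<alpha> i - \<gamma> i) < lvl n \<alpha>"
  using lvl_sub[of \<gamma> \<alpha> n] lvl_pos[of \<gamma> n] lvl_mono[of \<gamma> \<alpha> n] M_le by fastforce

lemma goodm_unique: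
  assumes g: "goodm k x" and g': "goodm k' x'"
  shows "\<alpha> \<in> I \<Longrightarrow> lvl n \<alpha> \<le> k \<Longrightarrow> lvl n \<alpha> \<le> k' \<Longrightarrow> x \<alpha> = x' \<alpha>"
proof (induction "lvl n \<alpha>" arbitrary: \<alpha> rule: less_induct)
  case less
  show ?case
  proof (cases "\<alpha> = (\<lambda>_. 0)")
    case True then show ?thesis using g g' by (simp add: goodm_def)
  next
    case False
    have aM: "\<alpha> \<in> M" using less.prems I_M by blast
    obtain s where s: "sp \<alpha> s" "x \<alpha> = y \<alpha> + s"
      using g less.prems False unfolding goodm_def tri_sp by blast
    obtain s' where s': "sp \<alpha> s'" "x' \<alpha> = y \<alpha> + s'"
      using g' less.prems False unfolding goodm_def tri_sp by blast
    have "s = s'"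
    proof (rule sp_unique[OF less.prems(1) s(1) s'(1)])
      fix \<gamma> assume gl: "\<gamma> \<le> \<alpha>" and gz: "\<gamma> \<noteq> (\<lambda>_. 0)"
      have gM: "\<gamma> \<in> M" using M_le aM gl by blast
      have lt: "lvl n (\<lambda>i. \<alpha> i - \<gamma> i) < lvl n \<alpha>" using lvl_sub_less aM gl gz by blast
      have eq: "x (\<lambda>i. \<alpha> i - \<gamma> i) = x' (\<lambda>i. \<alpha> i - \<gamma> i)"
        using less.hyps[OF lt] I_sub less.prems lt by fastforce
      have "dp \<gamma> (x \<alpha>) = dp \<gamma> (x' \<alpha>)"
        using g g' less.prems gM gl eq unfolding goodm_def by auto
      then show "dp \<gamma> s = dp \<gamma> s'" using s s' dp_plus by simp
    qed
    then show ?thesis using s s' by simp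
  qed
qed


lemma sub_self: "(\<lambda>i. \<alpha> i - \<alpha> i) = (\<lambda>_. 0::nat)" by simp

lemma ex_claim:
  assumes g: "goodm km x" and a: "\<alpha> \<in> I" and la: "lvl n \<alpha> = Suc km"
  shows "tri \<alpha> v \<Longrightarrow> (\<forall>\<gamma>\<in>M. \<gamma> \<le> \<alpha> \<longrightarrow> \<gamma> \<noteq> (\<lambda>_. 0) \<longrightarrow> k < lvl n \<gamma> \<longrightarrow> dp \<gamma> v = x (\<lambda>i. \<alpha> i - \<gamma> i))
    \<Longrightarrow> \<exists>v'. tri \<alpha> v' \<and> (\<forall>\<gamma>\<in>M. \<gamma> \<le> \<alpha> \<longrightarrow> \<gamma> \<noteq> (\<lambda>_. 0) \<longrightarrow> dp \<gamma> v' = x (\<lambda>i. \<alpha> i - \<gamma> i))"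
proof (induction k arbitrary: v)
  case 0
  then show ?case using lvl_pos by blast
next
  case (Suc k)
  note tv = Suc.prems(1) and H = Suc.prems(2)
  have aM: "\<alpha> \<in> M" using a I_M by blast
  define G where "G = {\<gamma>. \<gamma> \<le> \<alpha> \<and> lvl n \<gamma> = Suc k \<and> \<gamma> \<noteq> \<alpha>}"
  have finG: "finite G" unfolding G_def by (rule finite_subset[OF _ fin_le[OF aM]]) auto
  define e where "e \<gamma> = dp \<gamma> v - x (\<lambda>i. \<alpha> i - \<gamma> i)" for \<gamma>
  define v' where "v' = v - (\<Sum>\<gamma>\<in>G. m (e \<gamma>) (x \<gamma>))"
  have Gfacts: "\<gamma> \<le> \<alpha>" "\<gamma> \<noteq> \<alpha>" "\<gamma> \<in> M" "\<gamma> \<in> I" "\<gamma> \<noteq> (\<lambda>_. 0)" "lvl n \<gamma> \<le> km" "lvl n \<gamma> = Suc k"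
    if "\<gamma> \<in> G" for \<gamma>
  proof -
    show g1: "\<gamma> \<le> \<alpha>" "\<gamma> \<noteq> \<alpha>" "lvl n \<gamma> = Suc k" using that G_def by auto
    show "\<gamma> \<in> M" using g1 aM M_le by blast
    show "\<gamma> \<in> I" using g1 a I_le by blast
    show "\<gamma> \<noteq> (\<lambda>_. 0)" using g1 lvl_zero by (metis nat.distinct(1))
    show "lvl n \<gamma> \<le> km" using lvl_strict[OF aM g1(1,2)] la by simp
  qed
  have eC: "e \<gamma> \<in> C" if gG: "\<gamma> \<in> G" for \<gamma>
    unfolding const_ring_def
  proof (clarify)
    fix i assume i: "i < n"
    define \<gamma>' where "\<gamma>' = (\<lambda>j. (if j = i then 1 else 0) + \<gamma> j)"
    have ai: "(\<lambda>i. \<alpha> i - \<gamma> i) \<in> I" using I_sub a by blast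
    have lai: "lvl n (\<lambda>i. \<alpha> i - \<gamma> i) \<le> km"
      using lvl_sub_less[OF aM Gfacts(1)[OF gG] Gfacts(5)[OF gG]] la by simp
    have eiM: "(\<lambda>j. if j = i then 1 else 0) \<in> M" using i by (auto simp: multi_idx_def)
    have g\<gamma>'M: "\<gamma>' \<in> M" using Gfacts(3)[OF gG] i by (auto simp: multi_idx_def \<gamma>'_def)
    have d1: "\<delta> i (dp \<gamma> v) = dp \<gamma>' v" using dp_shift[OF i] \<gamma>'_def by simp
    have d2: "\<delta> i (x (\<lambda>i. \<alpha> i - \<gamma> i)) = (if (\<lambda>j. if j = i then 1 else 0) \<le> (\<lambda>i. \<alpha> i - \<gamma> i)
        then x (\<lambda>j. (\<alpha> j - \<gamma> j) - (if j = i then 1 else 0)) else 0)"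
      using goodm_dp[OF g ai lai eiM] dp_unit1[OF i] by simp
    have "\<delta> i (e \<gamma>) = \<delta> i (dp \<gamma> v) - \<delta> i (x (\<lambda>i. \<alpha> i - \<gamma> i))"
      unfolding e_def using addf_diff der_addf der i by blast
    also have "\<dots> = 0"
    proof (cases "\<gamma> i < \<alpha> i")
      case True
      have le1: "(\<lambda>j. if j = i then 1 else 0) \<le> (\<lambda>i. \<alpha> i - \<gamma> i)" using True by (auto simp: le_fun_def)
      have le2: "\<gamma>' \<le> \<alpha>" using True Gfacts(1)[OF gG] by (auto simp: le_fun_def \<gamma>'_def)
      have nz: "\<gamma>' \<noteq> (\<lambda>_. 0)"
      proof
        assume "\<gamma>' = (\<lambda>_. 0)"
        then have "\<gamma>' i = 0" by simp
        then show False by (simp add: \<gamma>'_def)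
      qed
      have lv: "Suc k < lvl n \<gamma>'" using lvl_e[OF i, of \<gamma>] Gfacts(7)[OF gG] \<gamma>'_def by (simp add: add.commute)
      have "dp \<gamma>' v = x (\<lambda>i. \<alpha> i - \<gamma>' i)" using H g\<gamma>'M le2 nz lv by blast
      moreover have "(\<lambda>i. \<alpha> i - \<gamma>' i) = (\<lambda>j. (\<alpha> j - \<gamma> j) - (if j = i then 1 else 0))"
        unfolding \<gamma>'_def by auto
      ultimately show ?thesis using d1 d2 le1 by simp
    next
      case False
      have nle: "\<not> (\<lambda>j. if j = i then 1 else 0) \<le> (\<lambda>i. \<alpha> i - \<gamma> i)"
      proof
        assume "(\<lambda>j. if j = i then 1 else 0) \<le> (\<lambda>i. \<alpha> i - \<gamma> i)"
        then have "(if i = i then 1 else 0) \<le> \<alpha> i - \<gamma> i" unfolding le_fun_def by blast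
        then show False using False by simp
      qed
      have "dp \<gamma>' v = 0" using tri_dp0[OF a tv i, of \<gamma>'] False by (simp add: \<gamma>'_def)
      then show ?thesis using d1 d2 nle by simp
    qed
    finally show "\<delta> i (e \<gamma>) = 0" .
  qed
  have tv': "tri \<alpha> v'"
  proof -
    obtain s where s: "sp \<alpha> s" "v = y \<alpha> + s" using tv tri_sp by blast
    have hsp: "sp \<alpha> (m (e \<gamma>) (x \<gamma>))" if gG: "\<gamma> \<in> G" for \<gamma>
    proof -
      have "tri \<gamma> (x \<gamma>)" by (rule goodm_tri[OF g Gfacts(4)[OF gG] Gfacts(6)[OF gG] Gfacts(5)[OF gG]])
      then obtain s\<gamma> where s\<gamma>: "sp \<gamma> s\<gamma>" "x \<gamma> = y \<gamma> + s\<gamma>" using tri_sp by blast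
      have "\<gamma> < \<alpha>" using Gfacts(1,2)[OF gG] by (simp add: order_less_le)
      then have 1: "sp \<alpha> (y \<gamma>)" using sp_y[OF aM _ Gfacts(5)[OF gG]] by blast
      have 2: "sp \<alpha> s\<gamma>" using sp_mono[OF aM Gfacts(1)[OF gG] s\<gamma>(1)] .
      have "sp \<alpha> (m (e \<gamma>) (y \<gamma> + s\<gamma>))" by (rule sp_m[OF sp_add[OF 1 2] eC[OF gG]])
      then show ?thesis using s\<gamma>(2) by simp
    qed
    have "sp \<alpha> (\<Sum>\<gamma>\<in>G. m (e \<gamma>) (x \<gamma>))" by (rule sp_sum[OF finG], rule hsp)
    then have "sp \<alpha> (s - (\<Sum>\<gamma>\<in>G. m (e \<gamma>) (x \<gamma>)))" by (rule sp_diff[OF s(1)])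
    moreover have "v' = y \<alpha> + (s - (\<Sum>\<gamma>\<in>G. m (e \<gamma>) (x \<gamma>)))" using s(2) v'_def by (simp add: algebra_simps)
    ultimately show ?thesis using tri_sp by blast
  qed
  have H': "\<forall>\<gamma>'\<in>M. \<gamma>' \<le> \<alpha> \<longrightarrow> \<gamma>' \<noteq> (\<lambda>_. 0) \<longrightarrow> k < lvl n \<gamma>' \<longrightarrow> dp \<gamma>' v' = x (\<lambda>i. \<alpha> i - \<gamma>' i)"
  proof (intro ballI impI)
    fix \<gamma>' assume g'M: "\<gamma>' \<in> M" and g'le: "\<gamma>' \<le> \<alpha>" and g'nz: "\<gamma>' \<noteq> (\<lambda>_. 0)" and g'lv: "k < lvl n \<gamma>'"
    have dxg: "dp \<gamma>' (x \<gamma>) = (if \<gamma>' \<le> \<gamma> then x (\<lambda>i. \<gamma> i - \<gamma>' i) else 0)" if gG: "\<gamma> \<in> G" for \<gamma>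
      using g Gfacts[OF gG] g'M unfolding goodm_def by blast
    have dv': "dp \<gamma>' v' = dp \<gamma>' v - (\<Sum>\<gamma>\<in>G. m (e \<gamma>) (dp \<gamma>' (x \<gamma>)))"
      unfolding v'_def by (simp add: dp_diff dp_sum dp_m eC)
    show "dp \<gamma>' v' = x (\<lambda>i. \<alpha> i - \<gamma>' i)"
    proof (cases "Suc k < lvl n \<gamma>'")
      case True
      have "(\<Sum>\<gamma>\<in>G. m (e \<gamma>) (dp \<gamma>' (x \<gamma>))) = 0"
      proof (rule sum.neutral, rule ballI)
        fix \<gamma> assume gG: "\<gamma> \<in> G"
        have "\<not> \<gamma>' \<le> \<gamma>" using lvl_mono[of \<gamma>' \<gamma> n] Gfacts(7)[OF gG] True by auto
        then show "m (e \<gamma>) (dp \<gamma>' (x \<gamma>)) = 0" using dxg[OF gG] m_addf addf_0 by metis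
      qed
      then show ?thesis using dv' H g'M g'le g'nz True by simp
    next
      case False
      then have lv: "lvl n \<gamma>' = Suc k" using g'lv by simp
      show ?thesis
      proof (cases "\<gamma>' = \<alpha>")
        case True
        have "(\<Sum>\<gamma>\<in>G. m (e \<gamma>) (dp \<gamma>' (x \<gamma>))) = 0"
        proof (rule sum.neutral, rule ballI)
          fix \<gamma> assume gG: "\<gamma> \<in> G"
          have "\<not> \<gamma>' \<le> \<gamma>" using Gfacts(1,2)[OF gG] True by auto
          then show "m (e \<gamma>) (dp \<gamma>' (x \<gamma>)) = 0" using dxg[OF gG] m_addf addf_0 by metis
        qed
        then show ?thesis using dv' True tri_dpa[OF a tv] g unfolding goodm_def by simp
      next
        case False
        have g'G: "\<gamma>' \<in> G" using False g'le lv G_def by auto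
        have "(\<Sum>\<gamma>\<in>G. m (e \<gamma>) (dp \<gamma>' (x \<gamma>))) = (\<Sum>\<gamma>\<in>G. if \<gamma> = \<gamma>' then e \<gamma>' else 0)"
        proof (rule sum.cong[OF refl])
          fix \<gamma> assume gG: "\<gamma> \<in> G"
          show "m (e \<gamma>) (dp \<gamma>' (x \<gamma>)) = (if \<gamma> = \<gamma>' then e \<gamma>' else 0)"
          proof (cases "\<gamma> = \<gamma>'")
            case True
            then show ?thesis using dxg[OF gG] g unfolding goodm_def by (simp add: m_one2)
          next
            case ne: False
            have "\<not> \<gamma>' \<le> \<gamma>" using lvl_strict[OF Gfacts(3)[OF gG], of \<gamma>'] ne lv Gfacts(7)[OF gG] by auto
            then show ?thesis using ne dxg[OF gG] m_addf addf_0 by metis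
          qed
        qed
        also have "\<dots> = e \<gamma>'" using g'G finG by simp
        finally show ?thesis using dv' e_def by simp
      qed
    qed
  qed
  show ?case using Suc.IH[OF tv' H'] .
qed

lemma ex_step:
  assumes g: "goodm km x" and a: "\<alpha> \<in> I" and la: "lvl n \<alpha> = Suc km"
  shows "\<exists>v. tri \<alpha> v \<and> (\<forall>\<gamma>\<in>M. \<gamma> \<le> \<alpha> \<longrightarrow> \<gamma> \<noteq> (\<lambda>_. 0) \<longrightarrow> dp \<gamma> v = x (\<lambda>i. \<alpha> i - \<gamma> i))"
proof (rule ex_claim[OF g a la, of "y \<alpha>" "lvl n \<alpha>"])
  show "tri \<alpha> (y \<alpha>)" using tri_sp sp_0 by fastforce
  show "\<forall>\<gamma>\<in>M. \<gamma> \<le> \<alpha> \<longrightarrow> \<gamma> \<noteq> (\<lambda>_. 0) \<longrightarrow> lvl n \<alpha> < lvl n \<gamma> \<longrightarrow> dp \<gamma> (y \<alpha>) = x (\<lambda>i. \<alpha> i - \<gamma> i)"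
    using lvl_mono by (metis not_le)
qed


lemma one_N: "1 \<in> N_set n \<delta> (\<lambda>_. 0)"
  unfolding N_set_def by (simp add: der der_one)

lemma exists_goodm: "\<exists>x. goodm k x"
proof (induction k)
  case 0
  define x :: "(nat \<Rightarrow> nat) \<Rightarrow> 'a" where "x \<alpha> = (if \<alpha> = (\<lambda>_. 0) then 1 else 0)" for \<alpha>
  have "goodm 0 x"
    unfolding goodm_def
  proof (intro conjI ballI impI)
    show "x (\<lambda>_. 0) = 1" by (simp add: x_def)
  next
    fix \<alpha> assume a: "\<alpha> \<in> I" "lvl n \<alpha> \<le> 0"
    then have a0: "\<alpha> = (\<lambda>_. 0)" using lvl_pos I_M by fastforce
    {
      assume "\<alpha> \<noteq> (\<lambda>_. 0)" then show "tri \<alpha> (x \<alpha>)" using a0 by simp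
    }
    fix \<gamma> assume gM: "\<gamma> \<in> M"
    show "dp \<gamma> (x \<alpha>) = (if \<gamma> \<le> \<alpha> then x (\<lambda>i. \<alpha> i - \<gamma> i) else 0)"
    proof (cases "\<gamma> \<le> \<alpha>")
      case True
      then have "\<gamma> = (\<lambda>_. 0)" using a0 by (simp add: le_fun_def fun_eq_iff)
      then show ?thesis using a0 by (simp add: dp_zero x_def)
    next
      case False
      then obtain i where "i < n" "\<alpha> i < \<gamma> i" using not_le_ex gM by blast
      then have "dp \<gamma> 1 = 0" using dp_N[OF one_N] a0 by simp
      then show ?thesis using False a0 by (simp add: x_def)
    qed
  qed
  then show ?case by blast
next
  case (Suc k)
  then obtain x where g: "goodm k x" by blast
  define P where "P \<alpha> v \<longleftrightarrow> tri \<alpha> v \<and> (\<forall>\<gamma>\<in>M. \<gamma> \<le> \<alpha> \<longrightarrow> \<gamma> \<noteq> (\<lambda>_. 0) \<longrightarrow> dp \<gamma> v = x (\<lambda>i. \<alpha> i - \<gamma> i))" for \<alpha> v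
  define x' where "x' \<alpha> = (if \<alpha> \<in> I \<and> lvl n \<alpha> = Suc k then (SOME v. P \<alpha> v) else x \<alpha>)" for \<alpha>
  have P: "P \<alpha> (x' \<alpha>)" if "\<alpha> \<in> I" "lvl n \<alpha> = Suc k" for \<alpha>
  proof -
    have "\<exists>v. P \<alpha> v" using ex_step[OF g that] unfolding P_def .
    then show ?thesis using that x'_def by (simp add: someI_ex)
  qed
  have low: "x' \<alpha> = x \<alpha>" if "lvl n \<alpha> \<le> k" for \<alpha> using that x'_def by auto
  have "goodm (Suc k) x'"
    unfolding goodm_def
  proof (intro conjI ballI impI)
    show "x' (\<lambda>_. 0) = 1" using low[of "\<lambda>_. 0"] goodm_0[OF g] by (simp add: lvl_zero)
  next
    fix \<alpha> assume a: "\<alpha> \<in> I" "lvl n \<alpha> \<le> Suc k"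
    have aM: "\<alpha> \<in> M" using a I_M by blast
    have sub_low: "x' (\<lambda>i. \<alpha> i - \<gamma> i) = x (\<lambda>i. \<alpha> i - \<gamma> i)" if "\<gamma> \<le> \<alpha>" "\<gamma> \<noteq> (\<lambda>_. 0)" for \<gamma>
      using low lvl_sub_less[OF aM that] a(2) by simp
    show "\<alpha> \<noteq> (\<lambda>_. 0) \<Longrightarrow> tri \<alpha> (x' \<alpha>)"
    proof (cases "lvl n \<alpha> = Suc k")
      case True then show ?thesis using P[OF a(1) True] P_def by blast
    next
      case False
      assume "\<alpha> \<noteq> (\<lambda>_. 0)"
      then show ?thesis using goodm_tri[OF g a(1)] low False a(2) by simp
    qed
    fix \<gamma> assume gM: "\<gamma> \<in> M"
    show "dp \<gamma> (x' \<alpha>) = (if \<gamma> \<le> \<alpha> then x' (\<lambda>i. \<alpha> i - \<gamma> i) else 0)"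
    proof (cases "lvl n \<alpha> = Suc k")
      case True
      have Pa: "P \<alpha> (x' \<alpha>)" using P[OF a(1) True] .
      show ?thesis
      proof (cases "\<gamma> \<le> \<alpha>")
        case gl: True
        show ?thesis
        proof (cases "\<gamma> = (\<lambda>_. 0)")
          case True then show ?thesis by (simp add: dp_zero le_fun_def)
        next
          case False
          then show ?thesis using Pa gl gM sub_low unfolding P_def by simp
        qed
      next
        case False
        then obtain i where "i < n" "\<alpha> i < \<gamma> i" using not_le_ex gM by blast
        moreover have "tri \<alpha> (x' \<alpha>)" using Pa P_def by blast
        ultimately show ?thesis using tri_dp0[OF a(1)] False by simp
      qed
    next
      case False
      then have lk: "lvl n \<alpha> \<le> k" using a(2) by simp
      show ?thesis
      proof (cases "\<gamma> \<le> \<alpha>")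
        case gl: True
        have "x' (\<lambda>i. \<alpha> i - \<gamma> i) = x (\<lambda>i. \<alpha> i - \<gamma> i)"
          using low lvl_mono[OF sub_le[of \<alpha> \<gamma>], of n] lk by simp
        then show ?thesis using goodm_dp[OF g a(1) lk gM] low[OF lk] gl by simp
      next
        case False
        then show ?thesis using goodm_dp[OF g a(1) lk gM] low[OF lk] by simp
      qed
    qed
  qed
  then show ?case by blast
qed

lemma descent_goodm: "descent n \<delta> I x \<Longrightarrow> (\<forall>\<alpha>\<in>I. \<alpha> \<noteq> (\<lambda>_. 0) \<longrightarrow> tri \<alpha> (x \<alpha>)) \<Longrightarrow> goodm k x"
  unfolding descent_def goodm_def by blast

lemma goodm_descent: "(\<And>k. goodm k x) \<Longrightarrow> descent n \<delta> I x \<and> (\<forall>\<alpha>\<in>I. \<alpha> \<noteq> (\<lambda>_. 0) \<longrightarrow> tri \<alpha> (x \<alpha>))"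
  unfolding descent_def goodm_def by (metis le_refl)

lemma main:
  "\<exists>x. (descent n \<delta> I x \<and> (\<forall>\<alpha>\<in>I. \<alpha> \<noteq> (\<lambda>_. 0) \<longrightarrow> tri \<alpha> (x \<alpha>)))
     \<and> (\<forall>x'. (descent n \<delta> I x' \<and> (\<forall>\<alpha>\<in>I. \<alpha> \<noteq> (\<lambda>_. 0) \<longrightarrow> tri \<alpha> (x' \<alpha>))) \<longrightarrow> (\<forall>\<alpha>\<in>I. x' \<alpha> = x \<alpha>))"
proof -
  define X where "X \<alpha> = (SOME x. goodm (lvl n \<alpha>) x) \<alpha>" for \<alpha>
  have gs: "goodm k (SOME x. goodm k x)" for k using exists_goodm someI_ex by metis
  have XG: "goodm k X" for k
    unfolding goodm_def
  proof (intro conjI ballI impI)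
    show "X (\<lambda>_. 0) = 1" using goodm_0[OF gs[of 0]] by (simp add: X_def lvl_zero)
  next
    fix \<alpha> assume a: "\<alpha> \<in> I" "lvl n \<alpha> \<le> k"
    let ?x = "SOME x. goodm (lvl n \<alpha>) x"
    have g: "goodm (lvl n \<alpha>) ?x" by (rule gs)
    have Xa: "X \<alpha> = ?x \<alpha>" by (simp add: X_def)
    show "\<alpha> \<noteq> (\<lambda>_. 0) \<Longrightarrow> tri \<alpha> (X \<alpha>)" using goodm_tri[OF g a(1) le_refl] Xa by simp
    fix \<gamma> assume gM: "\<gamma> \<in> M"
    show "dp \<gamma> (X \<alpha>) = (if \<gamma> \<le> \<alpha> then X (\<lambda>i. \<alpha> i - \<gamma> i) else 0)"
    proof (cases "\<gamma> \<le> \<alpha>")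
      case True
      let ?b = "\<lambda>i. \<alpha> i - \<gamma> i"
      have bI: "?b \<in> I" using I_sub a(1) by blast
      have lb: "lvl n ?b \<le> lvl n \<alpha>" using lvl_mono[OF sub_le] by blast
      have "X ?b = ?x ?b"
        unfolding X_def using goodm_unique[OF gs g bI le_refl lb] by simp
      then show ?thesis using goodm_dp[OF g a(1) le_refl gM] Xa True by simp
    next
      case False
      then show ?thesis using goodm_dp[OF g a(1) le_refl gM] Xa by simp
    qed
  qed
  show ?thesis
  proof (intro exI conjI allI impI ballI)
    show "descent n \<delta> I X" "\<And>\<alpha>. \<alpha> \<in> I \<Longrightarrow> \<alpha> \<noteq> (\<lambda>_. 0) \<Longrightarrow> tri \<alpha> (X \<alpha>)"
      using goodm_descent[OF XG] by auto
  next
    fix x' \<alpha> assume h: "descent n \<delta> I x' \<and> (\<forall>\<alpha>\<in>I. \<alpha> \<noteq> (\<lambda>_. 0) \<longrightarrow> tri \<alpha> (x' \<alpha>))" and a: "\<alpha> \<in> I"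
    have "goodm k x'" for k using descent_goodm h by blast
    then show "x' \<alpha> = X \<alpha>" using goodm_unique[OF _ XG a le_refl le_refl] by blast
  qed
qed

end

theorem lemma2p3:
  fixes \<delta> :: "nat \<Rightarrow> 'a::ring_1 \<Rightarrow> 'a" and n :: nat and d :: "nat \<Rightarrow> enat"
    and y :: "(nat \<Rightarrow> nat) \<Rightarrow> 'a"
  assumes der: "\<And>i. i < n \<Longrightarrow> derivation (\<delta> i)"
    and comm: "\<And>i j. i < n \<Longrightarrow> j < n \<Longrightarrow> \<delta> i \<circ> \<delta> j = \<delta> j \<circ> \<delta> i"
    and yN: "\<And>\<alpha>. \<alpha> \<in> idx_set n d \<Longrightarrow> y \<alpha> \<in> N_set n \<delta> \<alpha>"
    and y1: "\<And>\<alpha>. \<alpha> \<in> idx_set n d \<Longrightarrow> delta_pow n \<delta> \<alpha> (y \<alpha>) = 1"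
  shows "\<exists>x. (descent n \<delta> (idx_set n d) x \<and>
            (\<forall>\<alpha>\<in>idx_set n d. \<alpha> \<noteq> (\<lambda>_. 0) \<longrightarrow>
               (\<exists>c. (\<forall>\<beta>. c \<beta> \<in> const_ring n \<delta>) \<and> c (\<lambda>_. 0) = 0 \<and>
                    x \<alpha> = y \<alpha> + (\<Sum>\<beta>\<in>{\<beta>. \<beta> < \<alpha>}. c \<beta> * y \<beta>))))
          \<and> (\<forall>x'. (descent n \<delta> (idx_set n d) x' \<and>
            (\<forall>\<alpha>\<in>idx_set n d. \<alpha> \<noteq> (\<lambda>_. 0) \<longrightarrow>
               (\<exists>c. (\<forall>\<beta>. c \<beta> \<in> const_ring n \<delta>) \<and> c (\<lambda>_. 0) = 0 \<and>
                    x' \<alpha> = y \<alpha> + (\<Sum>\<beta>\<in>{\<beta>. \<beta> < \<alpha>}. c \<beta> * y \<beta>))))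
              \<longrightarrow> (\<forall>\<alpha>\<in>idx_set n d. x' \<alpha> = x \<alpha>))
        \<and> (\<exists>z. (descent n \<delta> (idx_set n d) z \<and>
            (\<forall>\<alpha>\<in>idx_set n d. \<alpha> \<noteq> (\<lambda>_. 0) \<longrightarrow>
               (\<exists>b. (\<forall>\<beta>. b \<beta> \<in> const_ring n \<delta>) \<and> b (\<lambda>_. 0) = 0 \<and>
                    z \<alpha> = y \<alpha> + (\<Sum>\<beta>\<in>{\<beta>. \<beta> < \<alpha>}. y \<beta> * b \<beta>))))
          \<and> (\<forall>z'. (descent n \<delta> (idx_set n d) z' \<and>
            (\<forall>\<alpha>\<in>idx_set n d. \<alpha> \<noteq> (\<lambda>_. 0) \<longrightarrow>
               (\<exists>b. (\<forall>\<beta>. b \<beta> \<in> const_ring n \<delta>) \<and> b (\<lambda>_. 0) = 0 \<and>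
                    z' \<alpha> = y \<alpha> + (\<Sum>\<beta>\<in>{\<beta>. \<beta> < \<alpha>}. y \<beta> * b \<beta>))))
              \<longrightarrow> (\<forall>\<alpha>\<in>idx_set n d. z' \<alpha> = z \<alpha>)))"
proof -
  interpret D: dctx n \<delta> using der comm by unfold_locales
  interpret L: ctx n \<delta> d y "(*)" "(*)"
    by unfold_locales (auto simp: der comm yN y1 algebra_simps D.C_mult const_ring_def der_lmul)
  interpret R: ctx n \<delta> d y "\<lambda>c a. a * c" "\<lambda>k c. c * k"
    by unfold_locales (auto simp: der comm yN y1 algebra_simps D.C_mult const_ring_def der_rmul)
  show ?thesis
    using L.main R.main unfolding L.tri_def R.tri_def by blast
qed

end
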